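(* Let $k\ge 3$. A graph $G$ is $k$-chromatic and double-edge-critical if and only if $G$ is the complete graph $K_k$.
   Context: All graphs are finite and simple. A graph $G$ is (vertex-)critical if $\chi(G-v)<\chi(G)$ for every vertex $v$. A vertex-critical graph $G$ is double-edge-critical if $\chi(G-e_1-e_2)\le\chi(G)-2$ for any two non-incident edges $e_1,e_2\in E(G)$. *)

theory Defs
  imports Main
begin

definition simple_graph :: "'a set \<Rightarrow> 'a set set \<Rightarrow> bool" where
  "simple_graph V E \<longleftrightarrow> finite V \<and>
     (\<forall>e\<in>E. \<exists>u v. e = {u, v} \<and> u \<noteq> v \<and> u \<in> V \<and> v \<in> V)"

definition colorable :: "'a set \<Rightarrow> 'a set set \<Rightarrow> nat \<Rightarrow> bool" where
  "colorable V E n \<longleftrightarrow> (\<exists>f. (\<forall>v\<in>V. f v < n) \<and> (\<forall>u v. {u, v} \<in> E \<longrightarrow> u \<noteq> v \<longrightarrow> f u \<noteq> f v))"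

definition chromatic_number :: "'a set \<Rightarrow> 'a set set \<Rightarrow> nat" where
  "chromatic_number V E = (LEAST n. colorable V E n)"

definition del_vertex_edges :: "'a set set \<Rightarrow> 'a \<Rightarrow> 'a set set" where
  "del_vertex_edges E v = {e \<in> E. v \<notin> e}"

definition vertex_critical :: "'a set \<Rightarrow> 'a set set \<Rightarrow> bool" where
  "vertex_critical V E \<longleftrightarrow>
     (\<forall>v\<in>V. chromatic_number (V - {v}) (del_vertex_edges E v) < chromatic_number V E)"

definition double_edge_critical :: "'a set \<Rightarrow> 'a set set \<Rightarrow> bool" where
  "double_edge_critical V E \<longleftrightarrow> vertex_critical V E \<and>
     (\<forall>e1\<in>E. \<forall>e2\<in>E. e1 \<inter> e2 = {} \<longrightarrow>
        int (chromatic_number V (E - {e1, e2})) \<le> int (chromatic_number V E) - 2)"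

definition complete_graph :: "'a set \<Rightarrow> 'a set set \<Rightarrow> bool" where
  "complete_graph V E \<longleftrightarrow> E = {{u, v} | u v. u \<in> V \<and> v \<in> V \<and> u \<noteq> v}"

end

theory Submission
  imports Defs
begin

definition inV :: "'a set set \<Rightarrow> 'a set \<Rightarrow> bool" where
  "inV E V \<longleftrightarrow> (\<forall>u v. {u, v} \<in> E \<longrightarrow> u \<in> V \<and> v \<in> V)"

lemma chi_le: "colorable V E n \<Longrightarrow> chromatic_number V E \<le> n"
  by (simp add: chromatic_number_def Least_le)

lemma chi_col: "colorable V E n \<Longrightarrow> colorable V E (chromatic_number V E)"
  unfolding chromatic_number_def by (rule LeastI)

lemma sg_inV: "simple_graph V E \<Longrightarrow> inV E V"
  unfolding simple_graph_def inV_def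
  by (metis doubleton_eq_iff)

lemma inV_sub: "inV E V \<Longrightarrow> E' \<subseteq> E \<Longrightarrow> inV E' V"
  unfolding inV_def by blast

lemma col_card: assumes "finite V" "inV E V" shows "colorable V E (card V)"
proof -
  obtain h where h: "bij_betw h V {0..<card V}"
    using ex_bij_betw_finite_nat[OF assms(1)] by blast
  show ?thesis unfolding colorable_def
  proof (intro exI[of _ h] conjI allI impI ballI)
    fix v assume "v \<in> V" thus "h v < card V" using h by (auto simp: bij_betw_def)
  next
    fix u v assume "{u, v} \<in> E" "u \<noteq> v"
    hence "u \<in> V" "v \<in> V" using assms(2) unfolding inV_def by auto
    thus "h u \<noteq> h v" using h \<open>u \<noteq> v\<close> by (auto simp: bij_betw_def inj_on_def)
  qed
qed

lemma complete_mem: "complete_graph V E \<Longrightarrow> p \<noteq> q \<Longrightarrow> ({p, q} \<in> E \<longleftrightarrow> p \<in> V \<and> q \<in> V)"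
  unfolding complete_graph_def by (auto simp: doubleton_eq_iff)

lemma complete_inV: "complete_graph V E \<Longrightarrow> inV E V"
  unfolding complete_graph_def inV_def by (auto simp: doubleton_eq_iff)

lemma chi_complete: assumes "finite V" "complete_graph V E"
  shows "chromatic_number V E = card V"
proof -
  have c: "colorable V E (card V)" using col_card assms complete_inV by blast
  have "card V \<le> n" if col: "colorable V E n" for n
  proof -
    obtain f where f: "\<forall>v\<in>V. f v < n" "\<forall>u v. {u, v} \<in> E \<longrightarrow> u \<noteq> v \<longrightarrow> f u \<noteq> f v"
      using col unfolding colorable_def by blast
    have "inj_on f V"
    proof (rule inj_onI, rule ccontr)
      fix u v assume "u \<in> V" "v \<in> V" "f u = f v" "u \<noteq> v"
      thus False using f(2) complete_mem[OF assms(2)] by blast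
    qed
    hence "card V = card (f ` V)" by (simp add: card_image)
    also have "\<dots> \<le> card {0..<n}" by (rule card_mono) (use f(1) in auto)
    finally show ?thesis by simp
  qed
  from this[OF chi_col[OF c]] chi_le[OF c] show ?thesis by simp
qed

lemma two_nbrs:
  assumes "simple_graph V E" "vertex_critical V E" "chromatic_number V E = k" "k \<ge> 3"
    "v \<in> V"
  shows "\<exists>w1 w2. w1 \<noteq> w2 \<and> {v, w1} \<in> E \<and> {v, w2} \<in> E"
proof (rule ccontr)
  assume na: "\<not> ?thesis"
  obtain w0 where w0: "\<And>w. {v, w} \<in> E \<Longrightarrow> w = w0"
    using na by blast
  let ?V = "V - {v}" and ?E = "del_vertex_edges E v"
  have lt: "chromatic_number ?V ?E < k" using assms unfolding vertex_critical_def by auto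
  have iv: "inV ?E ?V" using sg_inV[OF assms(1)] unfolding inV_def del_vertex_edges_def by auto
  have "finite ?V" using assms(1) unfolding simple_graph_def by auto
  from chi_col[OF col_card[OF this iv]]
  obtain f where f: "\<forall>u\<in>?V. f u < chromatic_number ?V ?E"
    "\<forall>u w. {u, w} \<in> ?E \<longrightarrow> u \<noteq> w \<longrightarrow> f u \<noteq> f w"
    unfolding colorable_def by blast
  define g where "g z = (if z = v then (if f w0 = 0 then 1 else 0) else f z)" for z
  have "colorable V E (k - 1)" unfolding colorable_def
  proof (intro exI[of _ g] conjI allI impI ballI)
    fix u assume u: "u \<in> V"
    show "g u < k - 1"
    proof (cases "u = v")
      case False
      hence "f u < chromatic_number ?V ?E" using f(1) u by auto
      thus ?thesis using lt False by (simp add: g_def)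
    qed (use assms(4) in \<open>auto simp: g_def\<close>)
  next
    fix u w assume e: "{u, w} \<in> E" "u \<noteq> w"
    show "g u \<noteq> g w"
    proof (cases "u = v \<or> w = v")
      case True
      then show ?thesis
      proof
        assume "u = v" hence "w = w0" using w0 e by auto
        thus ?thesis using \<open>u = v\<close> e by (auto simp: g_def)
      next
        assume "w = v" hence "u = w0" using w0 e by (metis insert_commute)
        thus ?thesis using \<open>w = v\<close> e by (auto simp: g_def)
      qed
    next
      case False
      hence "{u, w} \<in> ?E" using e by (auto simp: del_vertex_edges_def)
      thus ?thesis using f(2) e False by (auto simp: g_def)
    qed
  qed
  from chi_le[OF this] assms(3,4) show False by simp
qed

theorem theorem33:
  fixes V :: "'a set" and E :: "'a set set" and k :: nat
  assumes "k \<ge> 3" and "simple_graph V E"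
  shows "(chromatic_number V E = k \<and> double_edge_critical V E) \<longleftrightarrow>
         (complete_graph V E \<and> card V = k)"
proof
  assume L: "chromatic_number V E = k \<and> double_edge_critical V E"
  have fin: "finite V" using assms(2) unfolding simple_graph_def by auto
  have iv: "inV E V" using sg_inV[OF assms(2)] .
  have vc: "vertex_critical V E" using L unfolding double_edge_critical_def by auto
  have adj: "{a, b} \<in> E" if ab: "a \<in> V" "b \<in> V" "a \<noteq> b" for a b
  proof (rule ccontr)
    assume nab: "{a, b} \<notin> E"
    obtain x where x: "{a, x} \<in> E"
      using two_nbrs[OF assms(2) vc _ assms(1) ab(1)] L by blast
    obtain y where y: "{b, y} \<in> E" "y \<noteq> x"
      using two_nbrs[OF assms(2) vc _ assms(1) ab(2)] L by blast
    have xV: "x \<in> V" "y \<in> V" using iv x y unfolding inV_def by auto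
    have ax: "a \<noteq> x" "b \<noteq> y" using x y assms(2) unfolding simple_graph_def
      by (metis doubleton_eq_iff insert_absorb2)+
    have xb: "x \<noteq> b" using x nab by auto
    have ya: "y \<noteq> a" using y nab by (metis insert_commute)
    have disj: "{a, x} \<inter> {b, y} = {}" using ab ax xb ya y by auto
    have "int (chromatic_number V (E - {{a, x}, {b, y}})) \<le> int k - 2"
    proof -
      have "\<forall>e1\<in>E. \<forall>e2\<in>E. e1 \<inter> e2 = {} \<longrightarrow>
        int (chromatic_number V (E - {e1, e2})) \<le> int (chromatic_number V E) - 2"
        using L unfolding double_edge_critical_def by blast
      hence "int (chromatic_number V (E - {{a, x}, {b, y}})) \<le> int (chromatic_number V E) - 2"
        using x y(1) disj by blast
      thus ?thesis using L by simp
    qed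
    hence le: "chromatic_number V (E - {{a, x}, {b, y}}) \<le> k - 2" by linarith
    let ?E = "E - {{a, x}, {b, y}}"
    have ivE: "inV ?E V" using iv unfolding inV_def by blast
    from chi_col[OF col_card[OF fin ivE]]
    obtain c where c: "\<forall>u\<in>V. c u < chromatic_number V ?E"
      "\<forall>u w. {u, w} \<in> ?E \<longrightarrow> u \<noteq> w \<longrightarrow> c u \<noteq> c w"
      unfolding colorable_def by blast
    define g where "g z = (if z = a \<or> z = b then k - 2 else c z)" for z
    have "colorable V E (k - 1)" unfolding colorable_def
    proof (intro exI[of _ g] conjI allI impI ballI)
      fix u assume "u \<in> V" thus "g u < k - 1" using c(1) le assms(1) by (auto simp: g_def)
    next
      fix u w assume e: "{u, w} \<in> E" "u \<noteq> w"
      have uw: "u \<in> V" "w \<in> V" using e iv unfolding inV_def by auto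
      show "g u \<noteq> g w"
      proof (cases "u \<in> {a, b} \<or> w \<in> {a, b}")
        case True
        have "\<not> (u \<in> {a, b} \<and> w \<in> {a, b})" using e nab
          by (auto simp: insert_commute)
        then show ?thesis using True c(1) le uw by (auto simp: g_def)
      next
        case False
        hence "{u, w} \<in> ?E" using e by (auto simp: doubleton_eq_iff)
        thus ?thesis using c(2) e False by (auto simp: g_def)
      qed
    qed
    from chi_le[OF this] L assms(1) show False by simp
  qed
  have cg: "complete_graph V E" unfolding complete_graph_def
  proof
    show "E \<subseteq> {{u, v} |u v. u \<in> V \<and> v \<in> V \<and> u \<noteq> v}"
      using assms(2) unfolding simple_graph_def by blast
    show "{{u, v} |u v. u \<in> V \<and> v \<in> V \<and> u \<noteq> v} \<subseteq> E" using adj by blast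
  qed
  moreover have "card V = k" using chi_complete[OF fin cg] L by simp
  ultimately show "complete_graph V E \<and> card V = k" by simp
next
  assume R: "complete_graph V E \<and> card V = k"
  have fin: "finite V" using assms(2) unfolding simple_graph_def by auto
  have chi: "chromatic_number V E = k" using chi_complete[OF fin] R by simp
  have vc: "vertex_critical V E" unfolding vertex_critical_def
  proof
    fix v assume v: "v \<in> V"
    have "complete_graph (V - {v}) (del_vertex_edges E v)"
      using R unfolding complete_graph_def del_vertex_edges_def by auto
    hence "chromatic_number (V - {v}) (del_vertex_edges E v) = card V - 1"
      using chi_complete[of "V - {v}"] fin v by simp
    thus "chromatic_number (V - {v}) (del_vertex_edges E v) < chromatic_number V E"
      using chi R assms(1) by simp
  qed
  have dec: "int (chromatic_number V (E - {e1, e2})) \<le> int (chromatic_number V E) - 2"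
    if e: "e1 \<in> E" "e2 \<in> E" "e1 \<inter> e2 = {}" for e1 e2
  proof -
    obtain a x where ax: "e1 = {a, x}" "a \<in> V" "x \<in> V" "a \<noteq> x"
      using e R unfolding complete_graph_def by blast
    obtain b y where by': "e2 = {b, y}" "b \<in> V" "y \<in> V" "b \<noteq> y"
      using e R unfolding complete_graph_def by blast
    have d: "a \<noteq> b" "a \<noteq> y" "x \<noteq> b" "x \<noteq> y" using e(3) ax by' by auto
    let ?W = "V - {x, y}"
    have cW: "card ?W = k - 2" using R fin ax by' d by (simp add: card_Diff_subset)
    obtain h where h: "bij_betw h ?W {0..<card ?W}"
      using ex_bij_betw_finite_nat[of ?W] fin by blast
    define r where "r z = (if z = x then a else if z = y then b else z)" for z
    have rW: "r z \<in> ?W" if "z \<in> V" for z using that ax by' d by (auto simp: r_def)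
    have "colorable V (E - {e1, e2}) (k - 2)" unfolding colorable_def
    proof (intro exI[of _ "h \<circ> r"] conjI allI impI ballI)
      fix u assume "u \<in> V"
      hence "r u \<in> ?W" using rW by blast
      hence "h (r u) \<in> {0..<card ?W}" using bij_betw_apply[OF h] by blast
      thus "(h \<circ> r) u < k - 2" using cW by simp
    next
      fix u w assume ee: "{u, w} \<in> E - {e1, e2}" "u \<noteq> w"
      have uw: "u \<in> V" "w \<in> V" using ee complete_mem[of V E u w] R by auto
      have "r u \<noteq> r w"
      proof
        assume "r u = r w"
        moreover have ne: "{u, w} \<noteq> {a, x}" "{u, w} \<noteq> {b, y}" using ee ax(1) by'(1) by auto
        ultimately show False
        proof (cases "u = x")
          case True
          then show ?thesis using ne ee(2) d \<open>r u = r w\<close> unfolding r_def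
            by (cases "w = y") (simp_all add: insert_commute)
        next
          case ux: False
          show ?thesis
          proof (cases "u = y")
            case True
            then show ?thesis using ne ee(2) d ux \<open>r u = r w\<close> unfolding r_def
              by (cases "w = x") (simp_all add: insert_commute)
          next
            case False
            then show ?thesis using ne ee(2) d ux \<open>r u = r w\<close> unfolding r_def
              by (cases "w = x"; cases "w = y") simp_all
          qed
        qed
      qed
      moreover have "r u \<in> ?W" "r w \<in> ?W" using rW uw by blast+
      moreover have "inj_on h ?W" using h by (rule bij_betw_imp_inj_on)
      ultimately show "(h \<circ> r) u \<noteq> (h \<circ> r) w" by (simp add: inj_on_eq_iff)
    qed
    from chi_le[OF this] chi assms(1) show ?thesis by linarith
  qed
  show "chromatic_number V E = k \<and> double_edge_critical V E"
    using chi vc dec unfolding double_edge_critical_def by blast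
qed

end
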